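(* Let $A$ be a unital involutive $k$-algebra. The $k$-submodule of $A$ spanned by all elements $a_0a_1a_2-a_2\overline{a_1}a_0$, with $a_0,a_1,a_2\in A$, is a two-sided ideal of $A$.
   Context: $k$ is a commutative ring. An involutive $k$-algebra is a unital associative $k$-algebra with a $k$-linear map $a\mapsto\overline a$ satisfying $\overline{\overline a}=a$, $\overline{ab}=\overline b\,\overline a$ and $\overline1=1$. *)

theory Defs
  imports Main
begin

text \<open>A unital associative k-algebra: the ring structure of A is the type class ring_1,
  the k-module structure is a scalar multiplication sm, bilinear w.r.t. the product.\<close>
definition k_algebra :: "('k::comm_ring_1 \<Rightarrow> 'a::ring_1 \<Rightarrow> 'a) \<Rightarrow> bool" where
  "k_algebra sm \<longleftrightarrow>
     (\<forall>c x y. sm c (x + y) = sm c x + sm c y) \<and>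
     (\<forall>c d x. sm (c + d) x = sm c x + sm d x) \<and>
     (\<forall>c d x. sm (c * d) x = sm c (sm d x)) \<and>
     (\<forall>x. sm 1 x = x) \<and>
     (\<forall>c x y. sm c (x * y) = sm c x * y) \<and>
     (\<forall>c x y. sm c (x * y) = x * sm c y)"

definition k_linear :: "('k::comm_ring_1 \<Rightarrow> 'a::ring_1 \<Rightarrow> 'a) \<Rightarrow> ('a \<Rightarrow> 'a) \<Rightarrow> bool" where
  "k_linear sm f \<longleftrightarrow> (\<forall>x y. f (x + y) = f x + f y) \<and> (\<forall>c x. f (sm c x) = sm c (f x))"

definition involutive_algebra ::
  "('k::comm_ring_1 \<Rightarrow> 'a::ring_1 \<Rightarrow> 'a) \<Rightarrow> ('a \<Rightarrow> 'a) \<Rightarrow> bool" where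
  "involutive_algebra sm bar \<longleftrightarrow>
     k_algebra sm \<and> k_linear sm bar \<and>
     (\<forall>a. bar (bar a) = a) \<and> (\<forall>a b. bar (a * b) = bar b * bar a) \<and> bar 1 = 1"

inductive_set k_span :: "('k::comm_ring_1 \<Rightarrow> 'a::ring_1 \<Rightarrow> 'a) \<Rightarrow> 'a set \<Rightarrow> 'a set"
  for sm :: "'k \<Rightarrow> 'a \<Rightarrow> 'a" and X :: "'a set" where
  base: "x \<in> X \<Longrightarrow> x \<in> k_span sm X"
| zero: "0 \<in> k_span sm X"
| add: "x \<in> k_span sm X \<Longrightarrow> y \<in> k_span sm X \<Longrightarrow> x + y \<in> k_span sm X"
| smult: "x \<in> k_span sm X \<Longrightarrow> sm c x \<in> k_span sm X"

definition k_submodule :: "('k::comm_ring_1 \<Rightarrow> 'a::ring_1 \<Rightarrow> 'a) \<Rightarrow> 'a set \<Rightarrow> bool" where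
  "k_submodule sm I \<longleftrightarrow> 0 \<in> I \<and> (\<forall>x\<in>I. \<forall>y\<in>I. x + y \<in> I) \<and> (\<forall>c. \<forall>x\<in>I. sm c x \<in> I)"

definition two_sided_ideal :: "('k::comm_ring_1 \<Rightarrow> 'a::ring_1 \<Rightarrow> 'a) \<Rightarrow> 'a set \<Rightarrow> bool" where
  "two_sided_ideal sm I \<longleftrightarrow> k_submodule sm I \<and> (\<forall>a x. x \<in> I \<longrightarrow> a * x \<in> I \<and> x * a \<in> I)"

end

theory Submission
  imports Defs
begin

theorem lemma5p7:
  fixes sm :: "'k::comm_ring_1 \<Rightarrow> 'a::ring_1 \<Rightarrow> 'a" and bar :: "'a \<Rightarrow> 'a"
  assumes "involutive_algebra sm bar"
  shows "two_sided_ideal sm (k_span sm {a0 * a1 * a2 - a2 * bar a1 * a0 | a0 a1 a2. True})"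
proof -
  define S where "S = {a0 * a1 * a2 - a2 * bar a1 * a0 | a0 a1 a2. True}"
  define I where "I = k_span sm S"
  have alg: "k_algebra sm" and bb: "\<And>a. bar (bar a) = a"
    and bm: "\<And>a b. bar (a * b) = bar b * bar a" and b1: "bar 1 = 1"
    using assms unfolding involutive_algebra_def by auto
  have sml: "\<And>c x y. sm c (x * y) = sm c x * y" and smr: "\<And>c x y. sm c (x * y) = x * sm c y"
    using alg unfolding k_algebra_def by auto
  have gen: "\<And>x y z. x * y * z - z * bar y * x \<in> I"
    unfolding I_def S_def by (rule k_span.base) blast
  have addI: "\<And>x y. x \<in> I \<Longrightarrow> y \<in> I \<Longrightarrow> x + y \<in> I"
    unfolding I_def by (rule k_span.add)
  have main: "a * x \<in> I \<and> x * a \<in> I" if "x \<in> I" for a x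
    using that unfolding I_def
  proof (induction x rule: k_span.induct)
    case (base x)
    then obtain a0 a1 a2 where x: "x = a0 * a1 * a2 - a2 * bar a1 * a0" by (auto simp: S_def)
    have l: "a * x = (a * (a0 * a1) * a2 - a2 * bar (a0 * a1) * a)
               + ((a2 * bar a1) * 1 * (bar a0 * a) - (bar a0 * a) * bar 1 * (a2 * bar a1))
               + (1 * bar a0 * (a * a2 * bar a1) - (a * a2 * bar a1) * bar (bar a0) * 1)"
      by (simp add: x bm bb b1 algebra_simps)
    have r: "x * a = (1 * a0 * (a1 * a2 * a) - (a1 * a2 * a) * bar a0 * 1)
               + ((a1 * a2) * 1 * (a * bar a0) - (a * bar a0) * bar 1 * (a1 * a2))
               + (a * (bar a0 * a1) * a2 - a2 * bar (bar a0 * a1) * a)"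
      by (simp add: x bm bb b1 algebra_simps)
    show ?case unfolding I_def[symmetric] using l r gen addI by metis
  next
    case zero
    then show ?case by (simp add: k_span.zero)
  next
    case (add x y)
    then show ?case by (metis distrib_left distrib_right k_span.add)
  next
    case (smult x c)
    then show ?case by (metis sml smr k_span.smult)
  qed
  have sub: "k_submodule sm I"
    unfolding k_submodule_def I_def by (auto intro: k_span.intros)
  show ?thesis using sub main unfolding two_sided_ideal_def I_def S_def by blast
qed

end
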